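(* Let $\mathcal{C}$ be a category with a faithful functor $Q:\mathcal{C}\to\mathbf{Set}$ satisfying conditions (1Q) and (2Q) below for an object $A_0$ and an element $x_0\in Q(A_0)$. Then: 1. If $\mu:A\to B$ is a morphism such that $Q(\mu):Q(A)\to Q(B)$ is surjective, then $\mu$ is an epimorphism. 2. A morphism $\mu:A\to B$ is a monomorphism if and only if $Q(\mu)$ is injective. 3. If $\Phi$ is an automorphism of $\mathcal{C}$, then there exists an epimorphism $\eta:A_0\to\Phi(A_0)$; and if such an epimorphism $\eta$ is an isomorphism, then $\Phi$ is potentially inner.
   Context: (1Q): for every object $A$ of $\mathcal{C}$ and every $a\in Q(A)$ there is exactly one morphism $\alpha:A_0\to A$ with $Q(\alpha)(x_0)=a$. (2Q): for every object $A$ of $\mathcal{C}$ there is a morphism $\alpha:A\to A_0$ such that $Q(\alpha):Q(A)\to Q(A_0)$ is surjective. An automorphism $\Phi$ of $\mathcal{C}$ is called potentially inner if there is a family of bijections $s_A:Q(A)\to Q(\Phi(A))$, $A\in\mathrm{Ob}\,\mathcal{C}$, such that $Q(\Phi(\mu))\circ s_A=s_B\circ Q(\mu)$ for every morphism $\mu:A\to B$. *)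

theory Defs
  imports Main
begin

text \<open>A (small) category given by a set of objects, a set of morphisms,
  domain/codomain maps, identities and composition (comp g f = g after f).\<close>

record ('o, 'm) category =
  Ob   :: "'o set"
  Mor  :: "'m set"
  dom  :: "'m \<Rightarrow> 'o"
  cod  :: "'m \<Rightarrow> 'o"
  idm  :: "'o \<Rightarrow> 'm"
  comp :: "'m \<Rightarrow> 'm \<Rightarrow> 'm"

definition hom :: "('o, 'm) category \<Rightarrow> 'o \<Rightarrow> 'o \<Rightarrow> 'm set" where
  "hom C A B = {f \<in> Mor C. dom C f = A \<and> cod C f = B}"

definition is_category :: "('o, 'm) category \<Rightarrow> bool" where
  "is_category C \<longleftrightarrow>
     (\<forall>f \<in> Mor C. dom C f \<in> Ob C \<and> cod C f \<in> Ob C) \<and>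
     (\<forall>A \<in> Ob C. idm C A \<in> hom C A A) \<and>
     (\<forall>f \<in> Mor C. \<forall>g \<in> Mor C. cod C f = dom C g \<longrightarrow>
         comp C g f \<in> hom C (dom C f) (cod C g)) \<and>
     (\<forall>f \<in> Mor C. comp C f (idm C (dom C f)) = f \<and> comp C (idm C (cod C f)) f = f) \<and>
     (\<forall>f \<in> Mor C. \<forall>g \<in> Mor C. \<forall>h \<in> Mor C.
         cod C f = dom C g \<longrightarrow> cod C g = dom C h \<longrightarrow>
         comp C h (comp C g f) = comp C (comp C h g) f)"

definition epi :: "('o, 'm) category \<Rightarrow> 'm \<Rightarrow> bool" where
  "epi C \<mu> \<longleftrightarrow> \<mu> \<in> Mor C \<and>
     (\<forall>g \<in> Mor C. \<forall>h \<in> Mor C. dom C g = cod C \<mu> \<longrightarrow> dom C h = cod C \<mu> \<longrightarrow>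
        cod C g = cod C h \<longrightarrow> comp C g \<mu> = comp C h \<mu> \<longrightarrow> g = h)"

definition mono :: "('o, 'm) category \<Rightarrow> 'm \<Rightarrow> bool" where
  "mono C \<mu> \<longleftrightarrow> \<mu> \<in> Mor C \<and>
     (\<forall>g \<in> Mor C. \<forall>h \<in> Mor C. cod C g = dom C \<mu> \<longrightarrow> cod C h = dom C \<mu> \<longrightarrow>
        dom C g = dom C h \<longrightarrow> comp C \<mu> g = comp C \<mu> h \<longrightarrow> g = h)"

definition iso :: "('o, 'm) category \<Rightarrow> 'm \<Rightarrow> bool" where
  "iso C \<mu> \<longleftrightarrow> \<mu> \<in> Mor C \<and>
     (\<exists>\<nu> \<in> hom C (cod C \<mu>) (dom C \<mu>).
        comp C \<nu> \<mu> = idm C (dom C \<mu>) \<and> comp C \<mu> \<nu> = idm C (cod C \<mu>))"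

text \<open>A functor Q from C to Set: Q(A) = QO A is a set (inside a universe type 'x),
  and Q(f) = QM f is a map QO (dom f) \<rightarrow> QO (cod f) (only its values on
  QO (dom f) matter).\<close>

definition set_functor :: "('o, 'm) category \<Rightarrow> ('o \<Rightarrow> 'x set) \<Rightarrow> ('m \<Rightarrow> 'x \<Rightarrow> 'x) \<Rightarrow> bool" where
  "set_functor C QO QM \<longleftrightarrow>
     (\<forall>f \<in> Mor C. \<forall>x \<in> QO (dom C f). QM f x \<in> QO (cod C f)) \<and>
     (\<forall>A \<in> Ob C. \<forall>x \<in> QO A. QM (idm C A) x = x) \<and>
     (\<forall>f \<in> Mor C. \<forall>g \<in> Mor C. cod C f = dom C g \<longrightarrow>
        (\<forall>x \<in> QO (dom C f). QM (comp C g f) x = QM g (QM f x)))"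

definition faithful_set_functor :: "('o, 'm) category \<Rightarrow> ('o \<Rightarrow> 'x set) \<Rightarrow> ('m \<Rightarrow> 'x \<Rightarrow> 'x) \<Rightarrow> bool" where
  "faithful_set_functor C QO QM \<longleftrightarrow> set_functor C QO QM \<and>
     (\<forall>f \<in> Mor C. \<forall>g \<in> Mor C. dom C f = dom C g \<longrightarrow> cod C f = cod C g \<longrightarrow>
        (\<forall>x \<in> QO (dom C f). QM f x = QM g x) \<longrightarrow> f = g)"

definition cond_1Q :: "('o, 'm) category \<Rightarrow> ('o \<Rightarrow> 'x set) \<Rightarrow> ('m \<Rightarrow> 'x \<Rightarrow> 'x) \<Rightarrow> 'o \<Rightarrow> 'x \<Rightarrow> bool" where
  "cond_1Q C QO QM A0 x0 \<longleftrightarrow>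
     (\<forall>A \<in> Ob C. \<forall>a \<in> QO A. \<exists>!\<alpha>. \<alpha> \<in> hom C A0 A \<and> QM \<alpha> x0 = a)"

definition cond_2Q :: "('o, 'm) category \<Rightarrow> ('o \<Rightarrow> 'x set) \<Rightarrow> ('m \<Rightarrow> 'x \<Rightarrow> 'x) \<Rightarrow> 'o \<Rightarrow> bool" where
  "cond_2Q C QO QM A0 \<longleftrightarrow>
     (\<forall>A \<in> Ob C. \<exists>\<alpha> \<in> hom C A A0. QM \<alpha> ` QO A = QO A0)"

definition endofunctor :: "('o, 'm) category \<Rightarrow> ('o \<Rightarrow> 'o) \<Rightarrow> ('m \<Rightarrow> 'm) \<Rightarrow> bool" where
  "endofunctor C PO PM \<longleftrightarrow>
     (\<forall>A \<in> Ob C. PO A \<in> Ob C) \<and>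
     (\<forall>f \<in> Mor C. PM f \<in> hom C (PO (dom C f)) (PO (cod C f))) \<and>
     (\<forall>A \<in> Ob C. PM (idm C A) = idm C (PO A)) \<and>
     (\<forall>f \<in> Mor C. \<forall>g \<in> Mor C. cod C f = dom C g \<longrightarrow> PM (comp C g f) = comp C (PM g) (PM f))"

definition automorphism :: "('o, 'm) category \<Rightarrow> ('o \<Rightarrow> 'o) \<Rightarrow> ('m \<Rightarrow> 'm) \<Rightarrow> bool" where
  "automorphism C PO PM \<longleftrightarrow>
     (\<exists>PO' PM'. endofunctor C PO PM \<and> endofunctor C PO' PM' \<and>
        (\<forall>A \<in> Ob C. PO' (PO A) = A \<and> PO (PO' A) = A) \<and>
        (\<forall>f \<in> Mor C. PM' (PM f) = f \<and> PM (PM' f) = f))"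

definition potentially_inner ::
  "('o, 'm) category \<Rightarrow> ('o \<Rightarrow> 'x set) \<Rightarrow> ('m \<Rightarrow> 'x \<Rightarrow> 'x) \<Rightarrow> ('o \<Rightarrow> 'o) \<Rightarrow> ('m \<Rightarrow> 'm) \<Rightarrow> bool" where
  "potentially_inner C QO QM PO PM \<longleftrightarrow>
     (\<exists>s :: 'o \<Rightarrow> 'x \<Rightarrow> 'x.
        (\<forall>A \<in> Ob C. bij_betw (s A) (QO A) (QO (PO A))) \<and>
        (\<forall>\<mu> \<in> Mor C. \<forall>x \<in> QO (dom C \<mu>).
            QM (PM \<mu>) (s (dom C \<mu>) x) = s (cod C \<mu>) (QM \<mu> x)))"

end

theory Submission
  imports Defs
begin

locale L =
  fixes C :: "('o, 'm) category"
    and QO :: "'o \<Rightarrow> 'x set" and QM :: "'m \<Rightarrow> 'x \<Rightarrow> 'x"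
    and A0 :: 'o and x0 :: 'x
  assumes cat: "is_category C"
    and fs: "faithful_set_functor C QO QM"
    and A0: "A0 \<in> Ob C" and x0: "x0 \<in> QO A0"
    and c1: "cond_1Q C QO QM A0 x0"
    and c2: "cond_2Q C QO QM A0"
begin

lemma homD: "f \<in> hom C A B \<Longrightarrow> f \<in> Mor C \<and> dom C f = A \<and> cod C f = B"
  by (simp add: hom_def)

lemma homI: "f \<in> Mor C \<Longrightarrow> f \<in> hom C (dom C f) (cod C f)"
  by (simp add: hom_def)

lemma ob_dom: "f \<in> Mor C \<Longrightarrow> dom C f \<in> Ob C"
  using cat by (simp add: is_category_def)
lemma ob_cod: "f \<in> Mor C \<Longrightarrow> cod C f \<in> Ob C"
  using cat by (simp add: is_category_def)

lemma comp_hom: "f \<in> hom C A B \<Longrightarrow> g \<in> hom C B D \<Longrightarrow> comp C g f \<in> hom C A D"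
  using cat unfolding is_category_def hom_def by auto

lemma QM_in: "f \<in> hom C A B \<Longrightarrow> x \<in> QO A \<Longrightarrow> QM f x \<in> QO B"
  using fs unfolding faithful_set_functor_def set_functor_def hom_def by auto

lemma QM_comp: "f \<in> hom C A B \<Longrightarrow> g \<in> hom C B D \<Longrightarrow> x \<in> QO A \<Longrightarrow>
    QM (comp C g f) x = QM g (QM f x)"
  using fs unfolding faithful_set_functor_def set_functor_def hom_def by auto

lemma faithful: "f \<in> hom C A B \<Longrightarrow> g \<in> hom C A B \<Longrightarrow> (\<And>x. x \<in> QO A \<Longrightarrow> QM f x = QM g x) \<Longrightarrow> f = g"
  using fs unfolding faithful_set_functor_def hom_def by auto

lemma uniq: "\<alpha> \<in> hom C A0 A \<Longrightarrow> \<beta> \<in> hom C A0 A \<Longrightarrow> QM \<alpha> x0 = QM \<beta> x0 \<Longrightarrow> \<alpha> = \<beta>"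
proof -
  assume a: "\<alpha> \<in> hom C A0 A" "\<beta> \<in> hom C A0 A" "QM \<alpha> x0 = QM \<beta> x0"
  have "A \<in> Ob C" using a(1) homD ob_cod by blast
  moreover have "QM \<alpha> x0 \<in> QO A" using QM_in a(1) x0 by blast
  ultimately have "\<exists>!\<gamma>. \<gamma> \<in> hom C A0 A \<and> QM \<gamma> x0 = QM \<alpha> x0"
    using c1 unfolding cond_1Q_def by blast
  thus ?thesis using a by metis
qed

lemma ex: "A \<in> Ob C \<Longrightarrow> a \<in> QO A \<Longrightarrow> \<exists>\<alpha> \<in> hom C A0 A. QM \<alpha> x0 = a"
  using c1 unfolding cond_1Q_def by blast

lemma part1: "\<mu> \<in> Mor C \<Longrightarrow> QM \<mu> ` QO (dom C \<mu>) = QO (cod C \<mu>) \<Longrightarrow> epi C \<mu>"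
  unfolding epi_def
proof (intro conjI ballI impI)
  fix g h assume m: "\<mu> \<in> Mor C" and s: "QM \<mu> ` QO (dom C \<mu>) = QO (cod C \<mu>)"
    and g: "g \<in> Mor C" and h: "h \<in> Mor C" and d: "dom C g = cod C \<mu>" "dom C h = cod C \<mu>"
    "cod C g = cod C h" and e: "comp C g \<mu> = comp C h \<mu>"
  have mh: "\<mu> \<in> hom C (dom C \<mu>) (cod C \<mu>)" using m homI by blast
  have gh: "g \<in> hom C (cod C \<mu>) (cod C g)" using g d homI by metis
  have hh: "h \<in> hom C (cod C \<mu>) (cod C g)" using h d homI by metis
  show "g = h"
  proof (rule faithful[OF gh hh])
    fix y assume "y \<in> QO (cod C \<mu>)"
    then obtain x where x: "x \<in> QO (dom C \<mu>)" "y = QM \<mu> x" using s by blast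
    show "QM g y = QM h y" using QM_comp[OF mh gh x(1)] QM_comp[OF mh hh x(1)] e x(2) by simp
  qed
qed auto

lemma part2: "\<mu> \<in> Mor C \<Longrightarrow> mono C \<mu> \<longleftrightarrow> inj_on (QM \<mu>) (QO (dom C \<mu>))"
proof
  assume m: "\<mu> \<in> Mor C" and mo: "mono C \<mu>"
  have mh: "\<mu> \<in> hom C (dom C \<mu>) (cod C \<mu>)" using m homI by blast
  show "inj_on (QM \<mu>) (QO (dom C \<mu>))"
  proof (rule inj_onI)
    fix x y assume x: "x \<in> QO (dom C \<mu>)" and y: "y \<in> QO (dom C \<mu>)" and e: "QM \<mu> x = QM \<mu> y"
    obtain \<alpha> where a: "\<alpha> \<in> hom C A0 (dom C \<mu>)" "QM \<alpha> x0 = x" using ex[OF ob_dom[OF m] x] by blast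
    obtain \<beta> where b: "\<beta> \<in> hom C A0 (dom C \<mu>)" "QM \<beta> x0 = y" using ex[OF ob_dom[OF m] y] by blast
    have "comp C \<mu> \<alpha> = comp C \<mu> \<beta>"
      apply (rule uniq[OF comp_hom[OF a(1) mh] comp_hom[OF b(1) mh]])
      using QM_comp[OF a(1) mh x0] QM_comp[OF b(1) mh x0] a b e by simp
    hence "\<alpha> = \<beta>" using mo a b homD unfolding mono_def by metis
    thus "x = y" using a b by simp
  qed
next
  assume m: "\<mu> \<in> Mor C" and inj: "inj_on (QM \<mu>) (QO (dom C \<mu>))"
  have mh: "\<mu> \<in> hom C (dom C \<mu>) (cod C \<mu>)" using m homI by blast
  show "mono C \<mu>" unfolding mono_def
  proof (intro conjI ballI impI)
    fix g h assume g: "g \<in> Mor C" and h: "h \<in> Mor C" and d: "cod C g = dom C \<mu>" "cod C h = dom C \<mu>"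
      "dom C g = dom C h" and e: "comp C \<mu> g = comp C \<mu> h"
    have gh: "g \<in> hom C (dom C g) (dom C \<mu>)" using g d homI by metis
    have hh: "h \<in> hom C (dom C g) (dom C \<mu>)" using h d homI by metis
    show "g = h"
    proof (rule faithful[OF gh hh])
      fix x assume x: "x \<in> QO (dom C g)"
      have "QM \<mu> (QM g x) = QM \<mu> (QM h x)"
        using QM_comp[OF gh mh x] QM_comp[OF hh mh x] e by simp
      thus "QM g x = QM h x" using inj QM_in[OF gh x] QM_in[OF hh x] inj_onD by metis
    qed
  qed (rule m)
qed


lemma endo_hom: "endofunctor C P F \<Longrightarrow> f \<in> hom C A B \<Longrightarrow> F f \<in> hom C (P A) (P B)"
  unfolding endofunctor_def hom_def by auto

lemma endo_comp: "endofunctor C P F \<Longrightarrow> f \<in> hom C A B \<Longrightarrow> g \<in> hom C B D \<Longrightarrow>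
   F (comp C g f) = comp C (F g) (F f)"
  unfolding endofunctor_def hom_def by auto

lemma endo_ob: "endofunctor C P F \<Longrightarrow> A \<in> Ob C \<Longrightarrow> P A \<in> Ob C"
  unfolding endofunctor_def by auto

lemma epiD: "epi C \<eta> \<Longrightarrow> \<eta> \<in> hom C A B \<Longrightarrow> g \<in> hom C B D \<Longrightarrow> h \<in> hom C B D \<Longrightarrow>
   comp C g \<eta> = comp C h \<eta> \<Longrightarrow> g = h"
  unfolding epi_def hom_def by auto

lemma part3:
  assumes aut: "automorphism C PO PM"
  shows "(\<exists>\<eta> \<in> hom C A0 (PO A0). epi C \<eta>)
        \<and> (\<forall>\<eta> \<in> hom C A0 (PO A0). epi C \<eta> \<and> iso C \<eta> \<longrightarrow>
             potentially_inner C QO QM PO PM)"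
proof -
  obtain PO' PM' where E: "endofunctor C PO PM" and E': "endofunctor C PO' PM'"
    and io: "\<And>A. A \<in> Ob C \<Longrightarrow> PO' (PO A) = A \<and> PO (PO' A) = A"
    and im: "\<And>f. f \<in> Mor C \<Longrightarrow> PM' (PM f) = f \<and> PM (PM' f) = f"
    using aut unfolding automorphism_def by blast
  have epiP: "epi C (PM f)" if f: "f \<in> hom C A B" and ef: "epi C f" for f A B
    unfolding epi_def
  proof (intro conjI ballI impI)
    have fh: "PM f \<in> hom C (PO A) (PO B)" using endo_hom[OF E f] .
    then show "PM f \<in> Mor C" using homD by blast
    fix g h assume g: "g \<in> Mor C" and h: "h \<in> Mor C" and d: "dom C g = cod C (PM f)"
      "dom C h = cod C (PM f)" "cod C g = cod C h" and e: "comp C g (PM f) = comp C h (PM f)"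
    have B: "B \<in> Ob C" using f homD ob_cod by blast
    have gh: "g \<in> hom C (PO B) (cod C g)" using g d fh homI homD by metis
    have hh: "h \<in> hom C (PO B) (cod C g)" using h d fh homI homD by metis
    have gh': "PM' g \<in> hom C B (PO' (cod C g))" using endo_hom[OF E' gh] io[OF B] by simp
    have hh': "PM' h \<in> hom C B (PO' (cod C g))" using endo_hom[OF E' hh] io[OF B] by simp
    have fm: "f \<in> Mor C" using f homD by blast
    have "comp C (PM' g) f = comp C (PM' h) f"
      using endo_comp[OF E' fh gh] endo_comp[OF E' fh hh] e im[OF fm] by simp
    hence "PM' g = PM' h" using epiD[OF ef f gh' hh'] by blast
    thus "g = h" using im g h by metis
  qed
  have part_a: "\<exists>\<eta> \<in> hom C A0 (PO A0). epi C \<eta>"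
  proof -
    have A': "PO' A0 \<in> Ob C" using endo_ob[OF E' A0] .
    obtain \<alpha> where a: "\<alpha> \<in> hom C (PO' A0) A0" "QM \<alpha> ` QO (PO' A0) = QO A0"
      using c2 A' unfolding cond_2Q_def by blast
    have "epi C \<alpha>" using part1 a homD by metis
    hence "epi C (PM \<alpha>)" using epiP a(1) by blast
    moreover have "PM \<alpha> \<in> hom C A0 (PO A0)" using endo_hom[OF E a(1)] io[OF A0] by simp
    ultimately show ?thesis by blast
  qed
  have part_b: "potentially_inner C QO QM PO PM"
    if eh: "\<eta> \<in> hom C A0 (PO A0)" and ee: "epi C \<eta>" and ei: "iso C \<eta>" for \<eta>
  proof -
    obtain \<nu> where nh: "\<nu> \<in> hom C (PO A0) A0" and nu: "comp C \<nu> \<eta> = idm C A0"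
      using ei eh unfolding iso_def hom_def by auto
    define al where "al A a = (THE \<alpha>. \<alpha> \<in> hom C A0 A \<and> QM \<alpha> x0 = a)" for A a
    have al: "al A a \<in> hom C A0 A \<and> QM (al A a) x0 = a" if "A \<in> Ob C" "a \<in> QO A" for A a
    proof -
      have "\<exists>!\<alpha>. \<alpha> \<in> hom C A0 A \<and> QM \<alpha> x0 = a" using c1 that unfolding cond_1Q_def by blast
      thus ?thesis unfolding al_def by (rule theI')
    qed
    have al_eq: "al A (QM \<alpha> x0) = \<alpha>" if "\<alpha> \<in> hom C A0 A" for A \<alpha>
    proof -
      have A: "A \<in> Ob C" using that homD ob_cod by blast
      have "QM \<alpha> x0 \<in> QO A" using QM_in that x0 by blast
      thus ?thesis using al[OF A] uniq that by blast
    qed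
    define s where "s A a = QM (PM (al A a)) (QM \<eta> x0)" for A a
    have eta0: "QM \<eta> x0 \<in> QO (PO A0)" using QM_in eh x0 by blast
    have s_alt: "s A a = QM (comp C (PM (al A a)) \<eta>) x0" if "A \<in> Ob C" "a \<in> QO A" for A a
      using QM_comp[OF eh endo_hom[OF E conjunct1[OF al[OF that]]] x0] unfolding s_def by simp
    have bij: "bij_betw (s A) (QO A) (QO (PO A))" if A: "A \<in> Ob C" for A
    proof (rule bij_betw_imageI)
      show "inj_on (s A) (QO A)"
      proof (rule inj_onI)
        fix a b assume a: "a \<in> QO A" and b: "b \<in> QO A" and e: "s A a = s A b"
        have ha: "PM (al A a) \<in> hom C (PO A0) (PO A)" using endo_hom[OF E] al[OF A a] by blast
        have hb: "PM (al A b) \<in> hom C (PO A0) (PO A)" using endo_hom[OF E] al[OF A b] by blast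
        have "comp C (PM (al A a)) \<eta> = comp C (PM (al A b)) \<eta>"
          using uniq[OF comp_hom[OF eh ha] comp_hom[OF eh hb]] e s_alt[OF A a] s_alt[OF A b] by simp
        hence "PM (al A a) = PM (al A b)" using epiD[OF ee eh ha hb] by blast
        hence "al A a = al A b" using im al[OF A a] al[OF A b] homD by metis
        thus "a = b" using al[OF A a] al[OF A b] by metis
      qed
      show "s A ` QO A = QO (PO A)"
      proof
        show "s A ` QO A \<subseteq> QO (PO A)"
        proof
          fix y assume "y \<in> s A ` QO A"
          then obtain a where a: "a \<in> QO A" and ya: "y = s A a" by blast
          have ha: "PM (al A a) \<in> hom C (PO A0) (PO A)" using endo_hom[OF E] al[OF A a] by blast
          show "y \<in> QO (PO A)" using ya QM_in[OF ha eta0] unfolding s_def by simp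
        qed
        show "QO (PO A) \<subseteq> s A ` QO A"
        proof
          fix y assume y: "y \<in> QO (PO A)"
          obtain \<beta> where b: "\<beta> \<in> hom C A0 (PO A)" "QM \<beta> x0 = y" using ex[OF endo_ob[OF E A] y] by blast
          define \<gamma> where "\<gamma> = comp C \<beta> \<nu>"
          have gh: "\<gamma> \<in> hom C (PO A0) (PO A)" using comp_hom[OF nh b(1)] \<gamma>_def by simp
          define \<alpha> where "\<alpha> = PM' \<gamma>"
          have ah: "\<alpha> \<in> hom C A0 A" using endo_hom[OF E' gh] io[OF A] io[OF A0] \<alpha>_def by simp
          have pa: "PM \<alpha> = \<gamma>" using im gh homD \<alpha>_def by metis
          have "comp C \<gamma> \<eta> = \<beta>"
          proof -
            have "comp C \<gamma> \<eta> = comp C \<beta> (comp C \<nu> \<eta>)"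
              using cat nh b(1) eh unfolding \<gamma>_def is_category_def hom_def by auto
            also have "\<dots> = comp C \<beta> (idm C A0)" using nu by simp
            also have "\<dots> = \<beta>" using cat b(1) unfolding is_category_def hom_def by auto
            finally show ?thesis .
          qed
          let ?a = "QM \<alpha> x0"
          have a: "?a \<in> QO A" using QM_in[OF ah x0] .
          have "s A ?a = y" using s_alt[OF A a] al_eq[OF ah] pa \<open>comp C \<gamma> \<eta> = \<beta>\<close> b by simp
          thus "y \<in> s A ` QO A" using a by force
        qed
      qed
    qed
    have nat: "QM (PM \<mu>) (s (dom C \<mu>) x) = s (cod C \<mu>) (QM \<mu> x)"
      if m: "\<mu> \<in> Mor C" and x: "x \<in> QO (dom C \<mu>)" for \<mu> x
    proof -
      have mh: "\<mu> \<in> hom C (dom C \<mu>) (cod C \<mu>)" using m homI by blast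
      have D: "dom C \<mu> \<in> Ob C" using ob_dom m by blast
      have ah: "al (dom C \<mu>) x \<in> hom C A0 (dom C \<mu>)" and ax: "QM (al (dom C \<mu>) x) x0 = x"
        using al[OF D x] by auto
      have "al (cod C \<mu>) (QM \<mu> x) = comp C \<mu> (al (dom C \<mu>) x)"
        using al_eq[OF comp_hom[OF ah mh]] QM_comp[OF ah mh x0] ax by simp
      hence "s (cod C \<mu>) (QM \<mu> x) = QM (comp C (PM \<mu>) (PM (al (dom C \<mu>) x))) (QM \<eta> x0)"
        unfolding s_def using endo_comp[OF E ah mh] by simp
      also have "\<dots> = QM (PM \<mu>) (s (dom C \<mu>) x)"
        unfolding s_def using QM_comp[OF endo_hom[OF E ah] endo_hom[OF E mh] eta0] .
      finally show ?thesis by simp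
    qed
    show ?thesis unfolding potentially_inner_def using bij nat by blast
  qed
  show ?thesis using part_a part_b by blast
qed
end

theorem lemma2:
  fixes C :: "('o, 'm) category"
    and QO :: "'o \<Rightarrow> 'x set" and QM :: "'m \<Rightarrow> 'x \<Rightarrow> 'x"
    and A0 :: 'o and x0 :: 'x
  assumes "is_category C"
    and "faithful_set_functor C QO QM"
    and "A0 \<in> Ob C" and "x0 \<in> QO A0"
    and "cond_1Q C QO QM A0 x0"
    and "cond_2Q C QO QM A0"
  shows "(\<forall>\<mu> \<in> Mor C. QM \<mu> ` QO (dom C \<mu>) = QO (cod C \<mu>) \<longrightarrow> epi C \<mu>)
    \<and> (\<forall>\<mu> \<in> Mor C. mono C \<mu> \<longleftrightarrow> inj_on (QM \<mu>) (QO (dom C \<mu>)))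
    \<and> (\<forall>PO PM. automorphism C PO PM \<longrightarrow>
          (\<exists>\<eta> \<in> hom C A0 (PO A0). epi C \<eta>)
        \<and> (\<forall>\<eta> \<in> hom C A0 (PO A0). epi C \<eta> \<and> iso C \<eta> \<longrightarrow>
             potentially_inner C QO QM PO PM))"
proof -
  interpret L C QO QM A0 x0 using assms by unfold_locales
  show ?thesis using part1 part2 part3 by blast
qed

end
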